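(* Let $X$ be a Banach space and let $T\in\mathrm{Lip}_0(X)$ be Gâteaux differentiable at every point of $X$. Then $$\omega(T)=\sup\{\omega(D_T(x)): x\in X\}.$$
   Context: $\mathrm{Lip}_0(X)$ is the set of Lipschitz maps $T:X\to X$ with $T(0)=0$. $T$ is Gâteaux differentiable at $x_0$ if there is a bounded linear operator $D_T(x_0):X\to X$ with $D_T(x_0)(u)=\lim_{t\to0}(T(x_0+tu)-T(x_0))/t$ for every $u\in X$. $D(x)=\{x^*\in X^*: x^*(x)=\|x^*\|\|x\|=\|x\|^2\}$. For $T\in\mathrm{Lip}_0(X)$, $\omega(T)=\sup\{|f(Tx-Ty)|/\|x-y\|^2: x\neq y,\ f\in D(x-y)\}$; for a bounded linear operator $S$ this equals $\sup\{|x^*(Sx)|: x\in S_X,\ x^*\in D(x)\}$. *)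

theory Defs
  imports "HOL-Analysis.Analysis"
begin

definition Lip0 :: "('a::real_normed_vector \<Rightarrow> 'a) set" where
  "Lip0 = {T. (\<exists>C. C-lipschitz_on UNIV T) \<and> T 0 = 0}"

definition duality_set :: "'a::real_normed_vector \<Rightarrow> ('a \<Rightarrow> real) set" where
  "duality_set x = {f. bounded_linear f \<and> f x = onorm f * norm x \<and> onorm f * norm x = (norm x)\<^sup>2}"

definition omega :: "('a::real_normed_vector \<Rightarrow> 'a) \<Rightarrow> real" where
  "omega T = Sup {\<bar>f (T x - T y)\<bar> / (norm (x - y))\<^sup>2 | x y f. x \<noteq> y \<and> f \<in> duality_set (x - y)}"

definition has_gateaux_derivative :: "('a::real_normed_vector \<Rightarrow> 'b::real_normed_vector) \<Rightarrow> ('a \<Rightarrow> 'b) \<Rightarrow> 'a \<Rightarrow> bool" where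
  "has_gateaux_derivative T D x0 \<longleftrightarrow> bounded_linear D \<and>
     (\<forall>u. ((\<lambda>t. (T (x0 + t *\<^sub>R u) - T x0) /\<^sub>R t) \<longlongrightarrow> D u) (at 0))"

definition gateaux_differentiable :: "('a::real_normed_vector \<Rightarrow> 'b::real_normed_vector) \<Rightarrow> 'a \<Rightarrow> bool" where
  "gateaux_differentiable T x0 \<longleftrightarrow> (\<exists>D. has_gateaux_derivative T D x0)"

definition gateaux_derivative :: "('a::real_normed_vector \<Rightarrow> 'b::real_normed_vector) \<Rightarrow> 'a \<Rightarrow> ('a \<Rightarrow> 'b)" where
  "gateaux_derivative T x0 = (SOME D. has_gateaux_derivative T D x0)"

end

theory Submission
  imports Defs
begin

definition OS :: "('a::real_normed_vector \<Rightarrow> 'a) \<Rightarrow> real set" where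
  "OS T = {\<bar>f (T x - T y)\<bar> / (norm (x - y))\<^sup>2 | x y f. x \<noteq> y \<and> f \<in> duality_set (x - y)}"

lemma omega_OS: "omega T = Sup (OS T)" unfolding omega_def OS_def by simp

lemma dual_onorm:
  assumes "f \<in> duality_set h" "h \<noteq> 0" shows "onorm f = norm h"
proof -
  have "onorm f * norm h = norm h * norm h" using assms(1) unfolding duality_set_def by (simp add: power2_eq_square)
  thus ?thesis using assms(2) by simp
qed

lemma dual_scale:
  assumes "f \<in> duality_set h" "t > 0" shows "(\<lambda>v. t * f v) \<in> duality_set (t *\<^sub>R h)"
proof -
  have bl: "bounded_linear f" and e1: "f h = onorm f * norm h" and e2: "onorm f * norm h = (norm h)\<^sup>2"
    using assms(1) unfolding duality_set_def by auto
  have bl2: "bounded_linear (\<lambda>v. t * f v)" using bl by (simp add: bounded_linear_const_mult)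
  have on: "onorm (\<lambda>v. t * f v) = t * onorm f"
    using onorm_scaleR[OF bl, of t] assms(2) by simp
  have lin: "f (t *\<^sub>R h) = t * f h" using bl by (simp add: linear_simps)
  show ?thesis unfolding duality_set_def using bl2 on lin e1 e2 assms(2)
    by (auto simp: power2_eq_square algebra_simps)
qed

lemma OS_bdd:
  assumes "T \<in> Lip0" shows "bdd_above (OS T)"
proof -
  obtain L where L: "L-lipschitz_on UNIV T" using assms unfolding Lip0_def by auto
  show ?thesis unfolding bdd_above_def
  proof (intro exI ballI)
    fix z assume "z \<in> OS T"
    then obtain x y f where z: "z = \<bar>f (T x - T y)\<bar> / (norm (x - y))\<^sup>2" and xy: "x \<noteq> y"
      and f: "f \<in> duality_set (x - y)" unfolding OS_def by auto
    have bl: "bounded_linear f" using f unfolding duality_set_def by auto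
    have on: "onorm f = norm (x - y)" using dual_onorm[OF f] xy by simp
    have "\<bar>f (T x - T y)\<bar> \<le> onorm f * norm (T x - T y)" using onorm[OF bl] by simp
    also have "\<dots> \<le> norm (x - y) * (L * norm (x - y))"
      using lipschitz_onD[OF L, of x y] on by (simp add: dist_norm mult_left_mono)
    finally have "\<bar>f (T x - T y)\<bar> \<le> L * (norm (x - y))\<^sup>2" by (simp add: power2_eq_square algebra_simps)
    moreover have "(norm (x - y))\<^sup>2 > 0" using xy by simp
    ultimately show "z \<le> L" unfolding z by (simp add: divide_le_eq)
  qed
qed

lemma OS_empty_iff:
  fixes D :: "'a::real_normed_vector \<Rightarrow> 'a"
  shows "OS D = {} \<longleftrightarrow> \<not>(\<exists>(h::'a) f. h \<noteq> 0 \<and> f \<in> duality_set h)"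
proof
  assume e: "OS D = {}"
  show "\<not>(\<exists>(h::'a) f. h \<noteq> 0 \<and> f \<in> duality_set h)"
  proof
    assume "\<exists>(h::'a) f. h \<noteq> 0 \<and> f \<in> duality_set h"
    then obtain h :: 'a and f where "h \<noteq> 0" "f \<in> duality_set h" by blast
    hence "\<bar>f (D h - D 0)\<bar> / (norm (h - 0))\<^sup>2 \<in> OS D" unfolding OS_def
      by force
    with e show False by simp
  qed
next
  assume n: "\<not>(\<exists>(h::'a) f. h \<noteq> 0 \<and> f \<in> duality_set h)"
  show "OS D = {}"
  proof (rule ccontr)
    assume "OS D \<noteq> {}"
    then obtain z where "z \<in> OS D" by blast
    then have "\<exists>x y :: 'a. \<exists>f. z = \<bar>f (D x - D y)\<bar> / (norm (x - y))\<^sup>2 \<and> x \<noteq> y \<and> f \<in> duality_set (x - y)"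
      unfolding OS_def by (simp only: mem_Collect_eq)
    then obtain x y :: 'a and f where "x \<noteq> y" "f \<in> duality_set (x - y)" by blast
    with n show False by (metis eq_iff_diff_eq_0)
  qed
qed

lemma gd:
  assumes "\<forall>x. gateaux_differentiable T x"
  shows "has_gateaux_derivative T (gateaux_derivative T x) x"
  using assms unfolding gateaux_differentiable_def gateaux_derivative_def by (metis someI_ex)

lemma dir_limit:
  assumes "has_gateaux_derivative T D p" "bounded_linear f"
  shows "((\<lambda>t. f (T (p + t *\<^sub>R h) - T p) / t) \<longlongrightarrow> f (D h)) (at 0)"
proof -
  have "((\<lambda>t. (T (p + t *\<^sub>R h) - T p) /\<^sub>R t) \<longlongrightarrow> D h) (at 0)"
    using assms(1) unfolding has_gateaux_derivative_def by blast
  from bounded_linear.tendsto[OF assms(2) this]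
  have "((\<lambda>t. f ((T (p + t *\<^sub>R h) - T p) /\<^sub>R t)) \<longlongrightarrow> f (D h)) (at 0)" .
  moreover have "(\<lambda>t. f ((T (p + t *\<^sub>R h) - T p) /\<^sub>R t)) = (\<lambda>t. f (T (p + t *\<^sub>R h) - T p) / t)"
    using linear_cmul[OF bounded_linear.linear[OF assms(2)]] by (intro ext) (simp add: divide_inverse mult.commute)
  ultimately show ?thesis by simp
qed

lemma OSD_le:
  assumes "has_gateaux_derivative T D p" and "T \<in> Lip0" and z: "z \<in> OS D"
  shows "z \<le> omega T"
proof -
  have blD: "bounded_linear D" using assms(1) unfolding has_gateaux_derivative_def by blast
  obtain x y :: 'a and f where zz: "z = \<bar>f (D x - D y)\<bar> / (norm (x - y))\<^sup>2" and xy: "x \<noteq> y"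
    and fd: "f \<in> duality_set (x - y)"
    using z unfolding OS_def by blast
  define h where "h = x - y"
  have h0: "h \<noteq> 0" using xy h_def by simp
  have Dh: "D x - D y = D h" unfolding h_def using blD by (simp add: linear_simps)
  have fh: "f \<in> duality_set h" using fd h_def by simp
  have blf: "bounded_linear f" using fh unfolding duality_set_def by blast
  have hp: "(norm h)\<^sup>2 > 0" using h0 by simp
  let ?q = "\<lambda>t. f (T (p + t *\<^sub>R h) - T p) / t"
  have lim: "(?q \<longlongrightarrow> f (D h)) (at_right 0)"
    using tendsto_mono[OF at_le[of "{0<..}" UNIV] dir_limit[OF assms(1) blf]] by simp
  have lim2: "((\<lambda>t. \<bar>?q t\<bar>) \<longlongrightarrow> \<bar>f (D h)\<bar>) (at_right 0)" using tendsto_rabs[OF lim] .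
  have ev0: "\<forall>t>0. \<bar>?q t\<bar> \<le> omega T * (norm h)\<^sup>2"
  proof (intro allI impI)
    fix t :: real assume t: "t > 0"
    have d: "(\<lambda>v. t * f v) \<in> duality_set ((p + t *\<^sub>R h) - p)" using dual_scale[OF fh t] by simp
    have ne: "p + t *\<^sub>R h \<noteq> p" using t h0 by simp
    have mem: "\<bar>t * f (T (p + t *\<^sub>R h) - T p)\<bar> / (norm ((p + t *\<^sub>R h) - p))\<^sup>2 \<in> OS T"
      unfolding OS_def mem_Collect_eq
      apply (rule exI[of _ "p + t *\<^sub>R h"])
      apply (rule exI[of _ p])
      apply (rule exI[of _ "\<lambda>v. t * f v"])
      using d ne by simp
    have "\<bar>t * f (T (p + t *\<^sub>R h) - T p)\<bar> / (norm ((p + t *\<^sub>R h) - p))\<^sup>2 \<le> omega T"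
      unfolding omega_OS by (rule cSup_upper[OF mem OS_bdd[OF assms(2)]])
    moreover have "\<bar>t * f (T (p + t *\<^sub>R h) - T p)\<bar> / (norm ((p + t *\<^sub>R h) - p))\<^sup>2
        = \<bar>?q t\<bar> / (norm h)\<^sup>2"
      using t by (simp add: abs_mult power2_eq_square)
    ultimately have "\<bar>?q t\<bar> / (norm h)\<^sup>2 \<le> omega T" by (simp only:)
    thus "\<bar>?q t\<bar> \<le> omega T * (norm h)\<^sup>2" using pos_divide_le_eq[OF hp] by blast
  qed
  have ev: "eventually (\<lambda>t. \<bar>?q t\<bar> \<le> omega T * (norm h)\<^sup>2) (at_right (0::real))"
    unfolding eventually_at_filter by (rule always_eventually) (use ev0 in auto)
  have "\<bar>f (D h)\<bar> \<le> omega T * (norm h)\<^sup>2"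
    by (rule tendsto_le[OF trivial_limit_at_right_real tendsto_const lim2 ev])
  thus ?thesis unfolding zz Dh h_def[symmetric] using hp by (simp add: divide_le_eq)
qed

lemma OSD_bdd:
  assumes "has_gateaux_derivative T D p" and "T \<in> Lip0"
  shows "bdd_above (OS D)"
  unfolding bdd_above_def using OSD_le[OF assms] by blast

lemma omegaD_le:
  fixes T :: "'a::real_normed_vector \<Rightarrow> 'a"
  assumes "has_gateaux_derivative T D p" and "T \<in> Lip0" and "OS T \<noteq> {}"
  shows "omega D \<le> omega T"
proof -
  have "OS D \<noteq> {}" using assms(3) OS_empty_iff[of D] OS_empty_iff[of T] by blast
  thus ?thesis unfolding omega_OS[of D] using OSD_le[OF assms(1,2)] unfolding omega_OS
    by (intro cSup_least) auto
qed

lemma R_bdd: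
  fixes T :: "'a::real_normed_vector \<Rightarrow> 'a"
  assumes "T \<in> Lip0" "\<forall>x. gateaux_differentiable T x" "OS T \<noteq> {}"
  shows "bdd_above {omega (gateaux_derivative T x) | x. True}"
  unfolding bdd_above_def using omegaD_le[OF gd[OF assms(2)] assms(1,3)] by blast

lemma main_le:
  fixes T :: "'a::real_normed_vector \<Rightarrow> 'a"
  assumes L: "T \<in> Lip0" and G: "\<forall>x. gateaux_differentiable T x" and ne: "OS T \<noteq> {}"
    and xy: "x \<noteq> y" and fd: "f \<in> duality_set (x - y)"
  shows "\<bar>f (T x - T y)\<bar> / (norm (x - y))\<^sup>2 \<le> Sup {omega (gateaux_derivative T x) | x. True}"
proof -
  define h where "h = x - y"
  have h0: "h \<noteq> 0" using xy h_def by simp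
  have fh: "f \<in> duality_set h" using fd h_def by simp
  have blf: "bounded_linear f" using fh unfolding duality_set_def by blast
  have lf: "linear f" using blf bounded_linear.linear by blast
  define g where "g t = f (T (y + t *\<^sub>R h))" for t
  define DD where "DD t = gateaux_derivative T (y + t *\<^sub>R h)" for t
  have der: "DERIV g t :> f (DD t h)" for t
  proof -
    let ?p = "y + t *\<^sub>R h"
    have eq: "(\<lambda>s. (g (t + s) - g t) / s) = (\<lambda>s. f (T (?p + s *\<^sub>R h) - T ?p) / s)"
    proof (rule ext)
      fix s
      have a: "T (y + (t + s) *\<^sub>R h) = T (?p + s *\<^sub>R h)" by (simp add: scaleR_add_left add.assoc)
      show "(g (t + s) - g t) / s = f (T (?p + s *\<^sub>R h) - T ?p) / s"
        unfolding g_def a using linear_diff[OF lf] by simp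
    qed
    show ?thesis unfolding DERIV_def eq DD_def by (rule dir_limit[OF gd[OF G] blf])
  qed
  obtain \<xi> where "g 1 - g 0 = (1 - 0) * f (DD \<xi> h)"
    using MVT2[of 0 1 g "\<lambda>t. f (DD t h)"] der by auto
  moreover have "g 1 - g 0 = f (T x - T y)"
    unfolding g_def h_def using linear_diff[OF lf] by simp
  ultimately have e: "f (T x - T y) = f (DD \<xi> h)" by simp
  have hg: "has_gateaux_derivative T (DD \<xi>) (y + \<xi> *\<^sub>R h)" unfolding DD_def by (rule gd[OF G])
  have blD: "bounded_linear (DD \<xi>)" using hg unfolding has_gateaux_derivative_def by blast
  have D0: "DD \<xi> 0 = 0" using blD linear_0 bounded_linear.linear by blast
  have mem: "\<bar>f (DD \<xi> h - DD \<xi> 0)\<bar> / (norm (h - 0))\<^sup>2 \<in> OS (DD \<xi>)"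
    unfolding OS_def using h0 fh by force
  have "\<bar>f (T x - T y)\<bar> / (norm (x - y))\<^sup>2 = \<bar>f (DD \<xi> h - DD \<xi> 0)\<bar> / (norm (h - 0))\<^sup>2"
    using e D0 h_def by simp
  also have "\<dots> \<le> omega (DD \<xi>)" unfolding omega_OS
    by (rule cSup_upper[OF mem OSD_bdd[OF hg L]])
  also have "\<dots> \<le> Sup {omega (gateaux_derivative T x) | x. True}"
    by (rule cSup_upper[OF _ R_bdd[OF L G ne]]) (auto simp: DD_def)
  finally show ?thesis .
qed

theorem proposition3p2:
  fixes T :: "'a::banach \<Rightarrow> 'a"
  assumes "T \<in> Lip0"
    and "\<forall>x. gateaux_differentiable T x"
  shows "omega T = Sup {omega (gateaux_derivative T x) | x. True}"
proof (cases "OS T = {}")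
  case True
  have "omega (gateaux_derivative T x) = Sup {}" for x
    using True OS_empty_iff[of T] OS_empty_iff[of "gateaux_derivative T x"] unfolding omega_OS by simp
  hence "{omega (gateaux_derivative T x) | x. True} = {Sup {}}" by auto
  thus ?thesis using True unfolding omega_OS[of T] by simp
next
  case False
  show ?thesis
  proof (rule antisym)
    show "omega T \<le> Sup {omega (gateaux_derivative T x) | x. True}"
      unfolding omega_OS[of T] using False
    proof (intro cSup_least)
      fix z assume "z \<in> OS T"
      then obtain x y :: 'a and f where "z = \<bar>f (T x - T y)\<bar> / (norm (x - y))\<^sup>2" "x \<noteq> y"
        "f \<in> duality_set (x - y)" unfolding OS_def by blast
      thus "z \<le> Sup {omega (gateaux_derivative T x) | x. True}"
        using main_le[OF assms False] by simp
    qed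
    show "Sup {omega (gateaux_derivative T x) | x. True} \<le> omega T"
      using omegaD_le[OF gd[OF assms(2)] assms(1) False] by (intro cSup_least) auto
  qed
qed

end
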